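(* Let $m\ge2$, $n\ge1$. An $m$-uniform multi-hypergraph $\mathcal{P}=([n],\mathbb{E})$ is a cp multi-hypergraph if and only if it has Property R.
   Context: $S(m,n)=\{(i_1,\dots,i_m): i_k\in[n]\}$. For a tuple or multiset $\eta=\{i_1,\dots,i_m\}$, its base $B(\eta)$ is the set of distinct elements among $i_1,\dots,i_m$, and $M(\eta)$ is the multiset formed by the entries of a tuple $\eta$. An $m$-uniform multi-hypergraph on $[n]$ is a pair $([n],\mathbb{E})$ with $\mathbb{E}$ a set of multisets of elements of $[n]$, each of cardinality $m$ counting repetitions. A symmetric real tensor $\mathcal{A}=(a_{i_1\cdots i_m})$ of order $m$ and dimension $n$ is an associated tensor of $\mathcal{P}$ if for every $(i_1,\dots,i_m)\in S(m,n)$, $a_{i_1\cdots i_m}\neq0$ when the multiset $\{i_1,\dots,i_m\}\in\mathbb{E}$ and $a_{i_1\cdots i_m}=0$ otherwise. For $\mathbf{u}\in\mathbb{R}^n$, $\mathbf{u}^m$ is the tensor with entries $u_{i_1}\cdots u_{i_m}$. A symmetric tensor $\mathcal{A}$ is $\{0,1\}$-cp if $\mathcal{A}=\sum_{j=1}^q\mathbf{u}_j^m$ for some $q\ge1$ and $\mathbf{u}_j\in\{0,1\}^n$ (such a tensor need not have entries in $\{0,1\}$). $\mathcal{P}$ is a cp multi-hypergraph if it has an associated tensor that is $\{0,1\}$-cp. For $\alpha\in\mathbb{E}$, $\mathcal{D}_\alpha=\{\eta\in S(m,n): B(\eta)\subseteq B(\alpha)\}$; $\mathcal{P}$ has Property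 R if for every $\alpha\in\mathbb{E}$ and every $\eta\in\mathcal{D}_\alpha$, the multiset $M(\eta)$ belongs to $\mathbb{E}$. *)

theory Defs
  imports Complex_Main "HOL-Library.Multiset"
begin

definition tuples :: "nat \<Rightarrow> nat \<Rightarrow> nat list set" where
  "tuples m n = {xs. length xs = m \<and> set xs \<subseteq> {1..n}}"

definition uniform_multi_hypergraph :: "nat \<Rightarrow> nat \<Rightarrow> nat multiset set \<Rightarrow> bool" where
  "uniform_multi_hypergraph m n E \<longleftrightarrow>
     (\<forall>e\<in>E. size e = m \<and> set_mset e \<subseteq> {1..n})"

text \<open>A real tensor of order m and dimension n is a function on tuples;
  only its values on S(m,n) are relevant.\<close>

definition symmetric_tensor :: "nat \<Rightarrow> nat \<Rightarrow> (nat list \<Rightarrow> real) \<Rightarrow> bool" where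
  "symmetric_tensor m n A \<longleftrightarrow>
     (\<forall>xs\<in>tuples m n. \<forall>ys\<in>tuples m n. mset xs = mset ys \<longrightarrow> A xs = A ys)"

definition associated_tensor :: "nat \<Rightarrow> nat \<Rightarrow> nat multiset set \<Rightarrow> (nat list \<Rightarrow> real) \<Rightarrow> bool" where
  "associated_tensor m n E A \<longleftrightarrow> symmetric_tensor m n A \<and>
     (\<forall>xs\<in>tuples m n. (A xs \<noteq> 0 \<longleftrightarrow> mset xs \<in> E))"

definition zero_one_cp :: "nat \<Rightarrow> nat \<Rightarrow> (nat list \<Rightarrow> real) \<Rightarrow> bool" where
  "zero_one_cp m n A \<longleftrightarrow> symmetric_tensor m n A \<and>
     (\<exists>q::nat. \<exists>u :: nat \<Rightarrow> nat \<Rightarrow> real. q \<ge> 1 \<and>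
        (\<forall>j<q. \<forall>i\<in>{1..n}. u j i \<in> {0, 1}) \<and>
        (\<forall>xs\<in>tuples m n. A xs = (\<Sum>j<q. \<Prod>k<m. u j (xs ! k))))"

definition cp_multi_hypergraph :: "nat \<Rightarrow> nat \<Rightarrow> nat multiset set \<Rightarrow> bool" where
  "cp_multi_hypergraph m n E \<longleftrightarrow>
     (\<exists>A. associated_tensor m n E A \<and> zero_one_cp m n A)"

definition property_R :: "nat \<Rightarrow> nat \<Rightarrow> nat multiset set \<Rightarrow> bool" where
  "property_R m n E \<longleftrightarrow>
     (\<forall>\<alpha>\<in>E. \<forall>\<eta>\<in>tuples m n. set \<eta> \<subseteq> set_mset \<alpha> \<longrightarrow> mset \<eta> \<in> E)"

end

theory Submission
  imports Defs
begin

lemma prod_ind: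
  "(\<Prod>k<length xs. (if xs ! k \<in> S then 1 else 0 :: real)) = (if set xs \<subseteq> S then 1 else 0)"
proof (cases "set xs \<subseteq> S")
  case True
  then show ?thesis by (auto intro!: prod.neutral simp: subset_iff in_set_conv_nth)
next
  case False
  then obtain k where "k < length xs" "xs ! k \<notin> S" by (auto simp: subset_iff in_set_conv_nth)
  then show ?thesis using False by (intro trans[OF prod_zero]) auto
qed

lemma prod_mset_eq:
  "(\<Prod>k<length xs. f (xs ! k)) = prod_mset (image_mset f (mset xs))"
  by (induction xs) (auto simp del: prod.lessThan_Suc simp add: prod.lessThan_Suc_shift)

lemma tuple_of_edge:
  assumes "size e = m" "set_mset e \<subseteq> {1..n}"
  shows "\<exists>xs\<in>tuples m n. mset xs = e"
  using assms by (intro bexI[of _ "sorted_list_of_multiset e"]) (auto simp: tuples_def, metis size_mset mset_sorted_list_of_multiset)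

theorem mainTheorem6:
  fixes m n :: nat and E :: "nat multiset set"
  assumes "m \<ge> 2" and "n \<ge> 1" and "uniform_multi_hypergraph m n E"
  shows "cp_multi_hypergraph m n E \<longleftrightarrow> property_R m n E"
proof
  assume "cp_multi_hypergraph m n E"
  then obtain A where as: "associated_tensor m n E A" and cp: "zero_one_cp m n A"
    unfolding cp_multi_hypergraph_def by blast
  from cp obtain q :: nat and u :: "nat \<Rightarrow> nat \<Rightarrow> real" where q: "q \<ge> 1"
    and u: "\<forall>j<q. \<forall>i\<in>{1..n}. u j i \<in> {0, 1}"
    and A: "\<forall>xs\<in>tuples m n. A xs = (\<Sum>j<q. \<Prod>k<m. u j (xs ! k))"
    unfolding zero_one_cp_def by blast
  have nonneg: "0 \<le> (\<Prod>k<m. u j (xs ! k))" if "j < q" "xs \<in> tuples m n" for j xs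
  proof (intro prod_nonneg)
    fix k assume "k \<in> {..<m}"
    then have "xs ! k \<in> {1..n}" using that(2) unfolding tuples_def by (auto dest!: nth_mem)
    then show "0 \<le> u j (xs ! k)" using u that(1) by force
  qed
  show "property_R m n E"
    unfolding property_R_def
  proof (intro ballI impI)
    fix \<alpha> \<eta> assume \<alpha>: "\<alpha> \<in> E" and \<eta>: "\<eta> \<in> tuples m n" and sub: "set \<eta> \<subseteq> set_mset \<alpha>"
    obtain xs where xs: "xs \<in> tuples m n" "mset xs = \<alpha>"
      using tuple_of_edge assms(3) \<alpha> unfolding uniform_multi_hypergraph_def by blast
    have "A xs \<noteq> 0" using as xs \<alpha> unfolding associated_tensor_def by auto
    then obtain j where j: "j < q" "(\<Prod>k<m. u j (xs ! k)) \<noteq> 0"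
      using A xs(1) by (metis (no_types, lifting) sum.neutral lessThan_iff)
    have one: "u j i = 1" if iin: "i \<in> set xs" for i
    proof -
      obtain k where k: "k < m" "xs ! k = i" using iin xs(1) unfolding tuples_def
        by (auto simp: in_set_conv_nth)
      have "u j i \<noteq> 0" using j(2) k by (metis finite_lessThan lessThan_iff prod_zero_iff)
      moreover have "i \<in> {1..n}" using iin xs(1) unfolding tuples_def by auto
      ultimately show ?thesis using u j(1) by force
    qed
    have "(\<Prod>k<m. u j (\<eta> ! k)) = 1"
    proof (intro prod.neutral ballI)
      fix k assume "k \<in> {..<m}"
      then have "\<eta> ! k \<in> set \<eta>" using \<eta> unfolding tuples_def by auto
      then show "u j (\<eta> ! k) = 1" using one sub xs(2) by auto
    qed
    moreover have "(\<Prod>k<m. u j (\<eta> ! k)) \<le> (\<Sum>j<q. \<Prod>k<m. u j (\<eta> ! k))"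
      using j(1) nonneg[OF _ \<eta>] by (intro member_le_sum) auto
    ultimately have "A \<eta> \<noteq> 0" using A \<eta> by auto
    then show "mset \<eta> \<in> E" using as \<eta> unfolding associated_tensor_def by auto
  qed
next
  assume R: "property_R m n E"
  define B where "B = set_mset ` E"
  have "B \<subseteq> Pow {1..n}" using assms(3) unfolding B_def uniform_multi_hypergraph_def by auto
  then have "finite B" by (meson finite_Pow_iff finite_atLeastAtMost finite_subset)
  then obtain L where L: "set L = B" using finite_list by blast
  define q where "q = length L + 1"
  define u :: "nat \<Rightarrow> nat \<Rightarrow> real" where
    "u j i = (if j < length L \<and> i \<in> L ! j then 1 else 0)" for j i
  define A where "A xs = (\<Sum>j<q. \<Prod>k<m. u j (xs ! k))" for xs
  have sym: "symmetric_tensor m n A"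
    unfolding symmetric_tensor_def A_def tuples_def
    by (auto intro!: sum.cong) (metis prod_mset_eq)
  have tm: "(\<Prod>k<m. u j (xs ! k)) = (if j < length L \<and> set xs \<subseteq> L ! j then 1 else 0)"
    if "xs \<in> tuples m n" for j xs
  proof -
    have len: "length xs = m" using that unfolding tuples_def by auto
    have "xs \<noteq> []" using len assms(1) by auto
    then show ?thesis
      unfolding u_def len[symmetric]
      using prod_ind[of xs "L ! j"] by (cases "j < length L") auto
  qed
  have assoc: "associated_tensor m n E A"
    unfolding associated_tensor_def
  proof (intro conjI sym ballI)
    fix xs assume xs: "xs \<in> tuples m n"
    have "A xs \<noteq> 0 \<longleftrightarrow> (\<exists>j<length L. set xs \<subseteq> L ! j)"
    proof
      assume "A xs \<noteq> 0"
      then obtain j where "j < q" "(\<Prod>k<m. u j (xs ! k)) \<noteq> 0" unfolding A_def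
        by (metis (no_types, lifting) sum.neutral lessThan_iff)
      then show "\<exists>j<length L. set xs \<subseteq> L ! j" using tm[OF xs] by (auto split: if_splits)
    next
      assume "\<exists>j<length L. set xs \<subseteq> L ! j"
      then obtain j where j: "j < length L" "set xs \<subseteq> L ! j" by blast
      have nn: "\<forall>j'\<in>{..<q}. 0 \<le> (\<Prod>k<m. u j' (xs ! k))" using tm[OF xs] by auto
      have le: "(\<Prod>k<m. u j (xs ! k)) \<le> (\<Sum>j<q. \<Prod>k<m. u j (xs ! k))"
        using j nn by (intro member_le_sum) (auto simp: q_def)
      have "(\<Prod>k<m. u j (xs ! k)) = 1" using tm[OF xs] j by simp
      then have "(1::real) \<le> (\<Sum>j<q. \<Prod>k<m. u j (xs ! k))" using le by simp
      then show "A xs \<noteq> 0" unfolding A_def by auto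
    qed
    also have "\<dots> \<longleftrightarrow> (\<exists>\<alpha>\<in>E. set xs \<subseteq> set_mset \<alpha>)"
    proof -
      have "(\<exists>j<length L. set xs \<subseteq> L ! j) \<longleftrightarrow> (\<exists>S\<in>set L. set xs \<subseteq> S)"
      proof
        assume "\<exists>j<length L. set xs \<subseteq> L ! j"
        then obtain j where "j < length L" "set xs \<subseteq> L ! j" by blast
        then show "\<exists>S\<in>set L. set xs \<subseteq> S" using nth_mem by blast
      next
        assume "\<exists>S\<in>set L. set xs \<subseteq> S"
        then obtain S where "S \<in> set L" "set xs \<subseteq> S" by blast
        then obtain j where "j < length L" "L ! j = S" by (auto simp: in_set_conv_nth)
        then show "\<exists>j<length L. set xs \<subseteq> L ! j" using \<open>set xs \<subseteq> S\<close> by blast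
      qed
      also have "\<dots> \<longleftrightarrow> (\<exists>\<alpha>\<in>E. set xs \<subseteq> set_mset \<alpha>)"
        unfolding L B_def by simp
      finally show ?thesis .
    qed
    also have "\<dots> \<longleftrightarrow> mset xs \<in> E"
    proof
      assume "\<exists>\<alpha>\<in>E. set xs \<subseteq> set_mset \<alpha>"
      then obtain \<alpha> where "\<alpha> \<in> E" "set xs \<subseteq> set_mset \<alpha>" by blast
      then show "mset xs \<in> E" using R xs unfolding property_R_def by blast
    next
      assume "mset xs \<in> E"
      then show "\<exists>\<alpha>\<in>E. set xs \<subseteq> set_mset \<alpha>" by (intro bexI[of _ "mset xs"]) auto
    qed
    finally show "A xs \<noteq> 0 \<longleftrightarrow> mset xs \<in> E" .
  qed
  have "zero_one_cp m n A"
    unfolding zero_one_cp_def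
    by (intro conjI sym exI[of _ q] exI[of _ u]) (auto simp: q_def u_def A_def)
  then show "cp_multi_hypergraph m n E"
    unfolding cp_multi_hypergraph_def using assoc by blast
qed

end
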